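(* Let $0<q<1$ and $s\in\mathbb{C}$, and regard all operators as acting on $\mathbb{C}[x]$. (i) For every $n\ge1$, $$H_n(x,s|q)=\big(x-s\,q^{n-2}D_x^q\big)\circ\big(x-s\,q^{n-3}D_x^q\big)\circ\cdots\circ\big(x-s\,q^{-1}D_x^q\big)(1),$$ i.e. $H_n(x,s|q)=\prod_{k=1}^n\big(x-s\,q^{n-1-k}D_x^q\big)\cdot(1)$ with the factor $k=1$ leftmost, where $x$ denotes multiplication by $x$. (ii) Let $A$ be the linear operator on $\mathbb{C}[x]$ given by $A f(x)=x f(x)+s\,(D_x^qf)(qx)$, so that $A\,x^m=x^{m+1}+s\,q^{m-1}\{m\}_q\,x^{m-1}$ (this is the operator $x+s\,q^N\circ D_x^q$, where $N x^m=m x^m$). Then for every $n\ge0$, $$\sum_{k=0}^{\lfloor n/2\rfloor}\frac{(-1)^kq^{k(k-1)}\{n\}_q!}{\{n-2k\}_q!\,\{2k\}_q!!}\,s^k\,A^{\,n-2k}(1)=x^n,$$ i.e. $H_n(A,s|q)\cdot(1)=x^n$.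
   Context: For $n\ge0$: $\{n\}_q=\frac{1-q^n}{1-q}$, $\{n\}_q!=\prod_{k=1}^n\{k\}_q$, $\{2n\}_q!!=\prod_{k=1}^n\{2k\}_q$, $\{0\}_q!=\{0\}_q!!=1$. The $q$-Hermite polynomials are $$H_n(x,s|q)=\sum_{k=0}^{\lfloor n/2\rfloor}\frac{(-1)^kq^{k(k-1)}\{n\}_q!}{\{n-2k\}_q!\,\{2k\}_q!!}\,s^kx^{n-2k}.$$ The $q$-derivative is $D_x^qf(x)=\frac{f(x)-f(qx)}{(1-q)x}$ (so $D_x^qx^m=\{m\}_qx^{m-1}$). *)

theory Defs
  imports Complex_Main "HOL-Computational_Algebra.Polynomial"
begin

definition qnum :: "real \<Rightarrow> nat \<Rightarrow> complex" where
  "qnum q n = (1 - complex_of_real q ^ n) / (1 - complex_of_real q)"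

definition qfact :: "real \<Rightarrow> nat \<Rightarrow> complex" where
  "qfact q n = (\<Prod>k=1..n. qnum q k)"

definition qdfact :: "real \<Rightarrow> nat \<Rightarrow> complex" where
  "qdfact q n = (\<Prod>k=1..n. qnum q (2*k))"  \<comment> \<open>{2n}_q!!\<close>

text \<open>q-derivative on C[x]: (f(x) - f(qx)) / ((1-q) x); the division is exact.\<close>
definition qderiv :: "real \<Rightarrow> complex poly \<Rightarrow> complex poly" where
  "qderiv q f = (f - pcompose f [:0, complex_of_real q:]) div [:0, 1 - complex_of_real q:]"

definition qHermite :: "nat \<Rightarrow> complex \<Rightarrow> real \<Rightarrow> complex poly" where
  "qHermite n s q = (\<Sum>k\<le>n div 2.
     monom ((-1)^k * complex_of_real q ^ (k*(k-1)) * qfact q n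
            / (qfact q (n - 2*k) * qdfact q k) * s^k) (n - 2*k))"

definition lowerOp :: "real \<Rightarrow> complex \<Rightarrow> int \<Rightarrow> complex poly \<Rightarrow> complex poly" where
  "lowerOp q s j f = [:0, 1:] * f - smult (s * complex_of_real q powi j) (qderiv q f)"

definition opA :: "real \<Rightarrow> complex \<Rightarrow> complex poly \<Rightarrow> complex poly" where
  "opA q s f = [:0, 1:] * f + smult s (pcompose (qderiv q f) [:0, complex_of_real q:])"

end

theory Submission
  imports Defs
begin

lemma lin_eq: "[:0, a:] = monom (a::complex) (Suc 0)"
  by (simp add: monom_Suc monom_0)

lemma pcomp_monom: "pcompose (monom c m) [:0, a:] = monom (c * a ^ m) m" for a c :: complex
  unfolding lin_eq by (rule poly_eqI) (subst coeff_pcompose_monom_linear, simp add: coeff_monom)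

lemma qnum_0[simp]: "qnum q 0 = 0" by (simp add: qnum_def)

lemma qnum_add: "q \<noteq> 1 \<Longrightarrow> qnum q (a+b) = qnum q a + complex_of_real q ^ a * qnum q b"
  unfolding qnum_def by (simp add: field_simps power_add)

lemma qnum_nz: "0 < q \<Longrightarrow> q < 1 \<Longrightarrow> m \<ge> 1 \<Longrightarrow> qnum q m \<noteq> 0"
proof -
  assume a: "0 < q" "q < 1" "m \<ge> 1"
  have "q ^ m < 1" using a by (simp add: power_less_one_iff)
  hence "complex_of_real q ^ m \<noteq> 1"
    by (metis of_real_eq_1_iff of_real_power less_irrefl)
  moreover have "complex_of_real q \<noteq> 1" using a by simp
  ultimately show ?thesis by (simp add: qnum_def)
qed

lemma qfact_Suc: "qfact q (Suc m) = qfact q m * qnum q (Suc m)"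
  by (simp add: qfact_def)
lemma qdfact_Suc: "qdfact q (Suc m) = qdfact q m * qnum q (2 * Suc m)"
  by (simp add: qdfact_def)
lemma qfact_nz: "0 < q \<Longrightarrow> q < 1 \<Longrightarrow> qfact q m \<noteq> 0"
  by (induct m) (auto simp: qfact_Suc qnum_nz, simp add: qfact_def)
lemma qdfact_nz: "0 < q \<Longrightarrow> q < 1 \<Longrightarrow> qdfact q m \<noteq> 0"
  by (induct m) (auto simp: qdfact_Suc qnum_nz, simp add: qdfact_def)

lemma x_dvd: "[:0, 1 - complex_of_real q:] dvd f - pcompose f [:0, complex_of_real q:]" if "q \<noteq> 1"
proof -
  have "[:0, 1:] dvd f - pcompose f [:0, complex_of_real q:]"
    using dvd_iff_poly_eq_0[of 0 "f - pcompose f [:0, complex_of_real q:]"] by (simp add: poly_pcompose)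
  moreover have "[:0, 1 - complex_of_real q:] = smult (1 - complex_of_real q) [:0,1:]" by simp
  moreover have "1 - complex_of_real q \<noteq> 0" using that by simp
  ultimately show ?thesis by (metis dvd_trans smult_dvd_iff dvd_refl)
qed

lemma qderiv_mult: "q \<noteq> 1 \<Longrightarrow> [:0, 1 - complex_of_real q:] * qderiv q f = f - pcompose f [:0, complex_of_real q:]"
  unfolding qderiv_def by (rule dvd_mult_div_cancel[OF x_dvd])

lemma qderiv_eq: "q \<noteq> 1 \<Longrightarrow> [:0, 1 - complex_of_real q:] * g = f - pcompose f [:0, complex_of_real q:] \<Longrightarrow> qderiv q f = g"
  unfolding qderiv_def by (metis nonzero_mult_div_cancel_left pCons_eq_0_iff right_minus_eq of_real_eq_1_iff)

lemma qderiv_add: assumes q: "q \<noteq> 1" shows "qderiv q (f + g) = qderiv q f + qderiv q g"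
  by (rule qderiv_eq[OF q]) (simp only: distrib_left qderiv_mult[OF q] pcompose_add, simp add: algebra_simps)

lemma qderiv_smult: assumes q: "q \<noteq> 1" shows "qderiv q (smult c f) = smult c (qderiv q f)"
  by (rule qderiv_eq[OF q]) (simp only: mult_smult_right qderiv_mult[OF q] pcompose_smult smult_diff_right)

lemma qderiv_0: "q \<noteq> 1 \<Longrightarrow> qderiv q 0 = 0"
  by (rule qderiv_eq) simp_all

lemma qderiv_sum: "q \<noteq> 1 \<Longrightarrow> qderiv q (\<Sum>k<M. f k) = (\<Sum>k<M. qderiv q (f k))" for M :: nat
  by (induct M) (simp_all add: qderiv_0 qderiv_add)

lemma qderiv_monom: "q \<noteq> 1 \<Longrightarrow> qderiv q (monom c m) = monom (c * qnum q m) (m - 1)"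
proof (rule qderiv_eq)
  assume q: "q \<noteq> 1"
  show "[:0, 1 - complex_of_real q:] * monom (c * qnum q m) (m - 1) = monom c m - monom c m \<circ>\<^sub>p [:0, complex_of_real q:]"
  proof (cases m)
    case 0 thus ?thesis by (simp add: pcomp_monom)
  next
    case (Suc j)
    have "1 - complex_of_real q \<noteq> 0" using q by simp
    thus ?thesis using Suc
      by (simp only: pcomp_monom, simp add: lin_eq mult_monom qnum_def diff_monom) (simp add: field_simps)
  qed
qed


lemma opA_add: "q \<noteq> 1 \<Longrightarrow> opA q s (f + g) = opA q s f + opA q s g"
  unfolding opA_def by (simp add: qderiv_add pcompose_add algebra_simps smult_add_right)
lemma opA_smult: "q \<noteq> 1 \<Longrightarrow> opA q s (smult c f) = smult c (opA q s f)"
  unfolding opA_def by (simp add: qderiv_smult pcompose_smult smult_add_right mult.commute)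
lemma opA_0: "q \<noteq> 1 \<Longrightarrow> opA q s 0 = 0"
  unfolding opA_def by (simp add: qderiv_0)
lemma opA_sum: "q \<noteq> 1 \<Longrightarrow> opA q s (\<Sum>k<M. f k) = (\<Sum>k<M. opA q s (f k))" for M :: nat
  by (induct M) (simp_all add: opA_0 opA_add)
lemma opA_monom: assumes q: "q \<noteq> 1" shows "opA q s (monom 1 m) = monom 1 (Suc m) + monom (s * qnum q m * complex_of_real q ^ (m - 1)) (m - 1)"
  unfolding opA_def by (simp only: qderiv_monom[OF q] pcomp_monom) (simp add: lin_eq mult_monom smult_monom)

definition cf :: "real \<Rightarrow> complex \<Rightarrow> nat \<Rightarrow> nat \<Rightarrow> complex" where
  "cf q s n k = (if 2*k \<le> n then (-1)^k * complex_of_real q ^ (k*(k-1)) * qfact q n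
            / (qfact q (n - 2*k) * qdfact q k) * s^k else 0)"

lemma cf_0: "0 < q \<Longrightarrow> q < 1 \<Longrightarrow> cf q s n 0 = 1"
  by (simp add: cf_def qdfact_def qfact_nz)

lemma cf_rec:
  assumes q0: "0 < q" and q1: "q < 1"
  shows "cf q s (n+2) (Suc k) = cf q s (n+1) (Suc k) - s * complex_of_real q ^ n * qnum q (n+1) * cf q s n k"
proof -
  let ?Q = "complex_of_real q"
  have nz: "qnum q m \<noteq> 0" if "m \<ge> 1" for m using qnum_nz[OF q0 q1 that] .
  have fnz: "qfact q m \<noteq> 0" "qdfact q m \<noteq> 0" for m using qfact_nz[OF q0 q1] qdfact_nz[OF q0 q1] by auto
  have qne: "q \<noteq> 1" using q1 by simp
  have F2: "qfact q (n+2) = qfact q n * qnum q (n+1) * qnum q (n+2)"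
    by (simp add: qfact_Suc)
  have F1: "qfact q (n+1) = qfact q n * qnum q (n+1)" by (simp add: qfact_Suc)
  have Dk: "qdfact q (Suc k) = qdfact q k * qnum q (2*k+2)" by (simp add: qdfact_Suc)
  have E: "?Q ^ (Suc k * (Suc k - 1)) = ?Q ^ (k*(k-1)) * ?Q^(2*k)"
  proof -
    have "Suc k * (Suc k - 1) = k*(k-1) + 2*k" by (cases k) (simp_all add: algebra_simps)
    thus ?thesis by (simp only: power_add)
  qed
  consider "2*k > n" | "2*k = n" | j where "n = 2*k + Suc j"
    by (metis less_imp_add_positive linorder_neqE_nat add_Suc_right add_0_right not0_implies_Suc)
  then show ?thesis
  proof cases
    case 1 thus ?thesis by (simp add: cf_def)
  next
    case 2
    have a1: "n + 2 - 2 * Suc k = 0" "n - 2*k = 0" "\<not> 2 * Suc k \<le> n+1" "2 * Suc k \<le> n+2" "2*k \<le> n" using 2 by simp_all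
    have f0: "qfact q 0 = 1" by (simp add: qfact_def)
    define X where "X = (-1)^k * s^(Suc k) * ?Q ^ (k*(k-1)) * qfact q n * qnum q (n+1)
        / (qdfact q k * qnum q (2*k+2))"
    have L: "cf q s (n+2) (Suc k) = - X * (?Q^(2*k) * qnum q (n+2))"
      unfolding cf_def X_def using nz[of "n+1"] nz[of "2*k+2"] fnz
      by (simp only: a1 if_True f0 F2 E Dk) (simp add: field_simps)
    have R1: "cf q s (n+1) (Suc k) = 0"
      unfolding cf_def using a1 by simp
    have R2: "s * ?Q ^ n * qnum q (n+1) * cf q s n k = X * (?Q^n * qnum q (2*k+2))"
      unfolding cf_def X_def using nz[of "n+1"] nz[of "2*k+2"] fnz
      by (simp only: a1 if_True f0) (simp add: field_simps)
    have "qnum q (n+2) = qnum q (2*k+2)" "?Q^(2*k) = ?Q^n" using 2 by simp_all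
    thus ?thesis unfolding L R1 R2 by (simp add: algebra_simps)
  next
    case 3
    have Fj: "qfact q (Suc j) = qfact q j * qnum q (Suc j)" by (simp add: qfact_Suc)
    have a1: "n + 2 - 2 * Suc k = Suc j" "n - 2*k = Suc j" "n + 1 - 2 * Suc k = j"
      "2 * Suc k \<le> n+2" "2 * Suc k \<le> n+1" "2*k \<le> n" using 3 by simp_all
    have key: "?Q^(2*k) * qnum q (n+2) = ?Q^(2*k) * qnum q (Suc j) + ?Q^n * qnum q (2*k+2)"
    proof -
      have "qnum q (n+2) = qnum q (Suc j) + ?Q^(Suc j) * qnum q (2*k+2)"
        using qnum_add[OF qne, of "Suc j" "2*k+2"] 3 by (simp add: add.commute)
      moreover have "?Q^(2*k) * ?Q^(Suc j) = ?Q^n" using 3 by (simp add: power_add[symmetric])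
      ultimately show ?thesis by (simp add: algebra_simps)
    qed
    define X where "X = (-1)^k * s^(Suc k) * ?Q ^ (k*(k-1)) * qfact q n * qnum q (n+1)
        / (qfact q j * qdfact q k * qnum q (Suc j) * qnum q (2*k+2))"
    have L: "cf q s (n+2) (Suc k) = - X * (?Q^(2*k) * qnum q (n+2))"
      unfolding cf_def X_def using nz[of "n+1"] nz[of "2*k+2"] nz[of "Suc j"] fnz
      by (simp only: a1 if_True F2 E Dk Fj) (simp add: field_simps)
    have R1: "cf q s (n+1) (Suc k) = - X * (?Q^(2*k) * qnum q (Suc j))"
      unfolding cf_def X_def using nz[of "n+1"] nz[of "2*k+2"] nz[of "Suc j"] fnz
      by (simp only: a1 if_True F1 E Dk Fj) (simp add: field_simps)
    have R2: "s * ?Q ^ n * qnum q (n+1) * cf q s n k = X * (?Q^n * qnum q (2*k+2))"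
      unfolding cf_def X_def using nz[of "n+1"] nz[of "2*k+2"] nz[of "Suc j"] fnz
      by (simp only: a1 if_True Fj) (simp add: field_simps)
    show ?thesis unfolding L R1 R2 using key by (simp add: algebra_simps)
  qed
qed

lemma cf_deriv:
  assumes q0: "0 < q" and q1: "q < 1"
  shows "cf q s (n+1) k * qnum q (n + 1 - 2*k) = qnum q (n+1) * cf q s n k"
proof -
  have nz: "qnum q m \<noteq> 0" if "m \<ge> 1" for m using qnum_nz[OF q0 q1 that] .
  have fnz: "qfact q m \<noteq> 0" "qdfact q m \<noteq> 0" for m using qfact_nz[OF q0 q1] qdfact_nz[OF q0 q1] by auto
  consider "2*k > n" | j where "n = 2*k + j"
    by (metis le_add_diff_inverse not_le)
  then show ?thesis
  proof cases
    case 1 thus ?thesis by (cases "2*k = n+1") (simp_all add: cf_def)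
  next
    case 2
    have a: "n + 1 - 2*k = Suc j" "n - 2*k = j" using 2 by simp_all
    show ?thesis unfolding cf_def using 2 nz[of "Suc j"] fnz
      by (simp add: a qfact_Suc field_simps)
  qed
qed
lemma smult_sum_poly: "smult c (\<Sum>k<M. f k) = (\<Sum>k<M. smult c (f k))" for M :: nat
  by (induct M) (simp_all add: smult_add_right)

definition SP :: "real \<Rightarrow> complex \<Rightarrow> (nat \<Rightarrow> complex poly) \<Rightarrow> nat \<Rightarrow> complex poly" where
  "SP q s P n = (\<Sum>k<Suc n. smult (cf q s n k) (P (n - 2*k)))"

lemma SP_ext: "(\<Sum>k<Suc n + d. smult (cf q s n k) (P (n - 2*k))) = SP q s P n"
  unfolding SP_def by (induct d) (simp_all add: cf_def)

lemma SP_rec: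
  assumes q0: "0 < q" and q1: "q < 1"
  shows "SP q s P (n+2) = (\<Sum>k<Suc (n+2). smult (cf q s (n+1) k) (P (n+2-2*k)))
          - smult (s * complex_of_real q ^ n * qnum q (n+1)) (SP q s P n)"
proof -
  let ?c = "s * complex_of_real q ^ n * qnum q (n+1)"
  have A: "SP q s P (n+2) = smult (cf q s (n+2) 0) (P (n+2)) + (\<Sum>k<n+2. smult (cf q s (n+2) (Suc k)) (P (n-2*k)))"
    unfolding SP_def by (subst sum.lessThan_Suc_shift) (simp del: sum.lessThan_Suc)
  have B: "(\<Sum>k<Suc (n+2). smult (cf q s (n+1) k) (P (n+2-2*k))) = smult (cf q s (n+1) 0) (P (n+2)) + (\<Sum>k<n+2. smult (cf q s (n+1) (Suc k)) (P (n-2*k)))"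
    by (subst sum.lessThan_Suc_shift) (simp del: sum.lessThan_Suc)
  have C: "smult ?c (SP q s P n) = (\<Sum>k<n+2. smult (?c * cf q s n k) (P (n-2*k)))"
  proof -
    have eq: "Suc n + 1 = n + 2" by simp
    have e: "(\<Sum>k<n+2. smult (cf q s n k) (P (n-2*k))) = SP q s P n"
      using SP_ext[where d=1 and n=n and q=q and s=s and P=P] by (simp only: eq)
    show ?thesis by (simp only: e[symmetric] smult_sum_poly smult_smult)
  qed
  have D: "(\<Sum>k<n+2. smult (cf q s (n+2) (Suc k)) (P (n-2*k))) = (\<Sum>k<n+2. smult (cf q s (n+1) (Suc k)) (P (n-2*k))) - (\<Sum>k<n+2. smult (?c * cf q s n k) (P(n-2*k)))"
    by (simp only: cf_rec[OF q0 q1] smult_diff_left sum_subtractf)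
  show ?thesis unfolding A B C D cf_0[OF q0 q1]
    by (simp add: algebra_simps del: sum.lessThan_Suc)
qed

lemma qHermite_SP: "qHermite n s q = SP q s (\<lambda>j. monom 1 j) n"
  unfolding qHermite_def SP_def
  by (rule sum.mono_neutral_cong_left) (auto simp: cf_def smult_monom)

lemma sum_conv_SP: "(\<Sum>k\<le>n div 2.
              smult ((-1)^k * complex_of_real q ^ (k*(k-1)) * qfact q n
                     / (qfact q (n - 2*k) * qdfact q k) * s^k) (P (n - 2*k))) = SP q s P n"
  unfolding SP_def
  by (rule sum.mono_neutral_cong_left) (auto simp: cf_def)

lemma foldr_step:
  "foldr (\<lambda>k f. lowerOp q s (m - int k) f) [1..<Suc n + 1] 1
   = lowerOp q s (m - 1) (foldr (\<lambda>k f. lowerOp q s (m - 1 - int k) f) [1..<n + 1] 1)"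
proof -
  have "[1..<Suc n + 1] = 1 # map Suc [1..<n+1]" by (simp add: map_Suc_upt upt_conv_Cons)
  moreover have "(\<lambda>k f. lowerOp q s (m - int k) f) \<circ> Suc = (\<lambda>k f. lowerOp q s (m - 1 - int k) f)"
    by (rule ext) (simp add: algebra_simps)
  ultimately show ?thesis by (simp add: foldr_map)
qed

lemma partii:
  assumes q0: "0 < q" and q1: "q < 1"
  shows "SP q s (\<lambda>j. (opA q s ^^ j) 1) n = monom 1 n"
proof -
  let ?P = "\<lambda>j. (opA q s ^^ j) 1"
  have qne: "q \<noteq> 1" using q1 by simp
  have T: "(\<Sum>k<Suc (m+2). smult (cf q s (m+1) k) (?P (m+2-2*k))) = opA q s (SP q s ?P (m+1))" for m
  proof -
    have "SP q s ?P (m+1) = (\<Sum>k<Suc (m+1) + 1. smult (cf q s (m+1) k) (?P (m+1-2*k)))"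
      by (rule SP_ext[symmetric])
    also have "Suc (m+1) + 1 = Suc (m+2)" by simp
    finally have e: "SP q s ?P (m+1) = (\<Sum>k<Suc (m+2). smult (cf q s (m+1) k) (?P (m+1-2*k)))" .
    show ?thesis unfolding e opA_sum[OF qne] opA_smult[OF qne]
    proof (rule sum.cong[OF refl])
      fix k assume "k \<in> {..<Suc (m+2)}"
      show "smult (cf q s (m+1) k) (?P (m+2-2*k)) = smult (cf q s (m+1) k) (opA q s (?P (m+1-2*k)))"
      proof (cases "2*k \<le> m+1")
        case True
        hence "m+2-2*k = Suc (m+1-2*k)" by simp
        thus ?thesis by simp
      qed (simp add: cf_def)
    qed
  qed
  have "SP q s ?P n = monom 1 n \<and> SP q s ?P (Suc n) = monom 1 (Suc n)"
  proof (induct n)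
    case 0
    have "opA q s 1 = monom 1 1" using opA_monom[OF qne, of s 0] by simp
    moreover have "cf q s (Suc 0) (Suc 0) = 0" by (simp add: cf_def)
    ultimately show ?case unfolding SP_def by (simp add: cf_0[OF q0 q1])
  next
    case (Suc m)
    have "SP q s ?P (m+2) = opA q s (monom 1 (m+1)) - smult (s * complex_of_real q ^ m * qnum q (m+1)) (monom 1 m)"
      using SP_rec[OF q0 q1, of s ?P m] T[of m] Suc by simp
    also have "\<dots> = monom 1 (m+2)"
      by (simp add: opA_monom[OF qne] smult_monom)
    finally show ?case using Suc by simp
  qed
  thus ?thesis by simp
qed

lemma parti_rec:
  assumes q0: "0 < q" and q1: "q < 1"
  shows "SP q s (\<lambda>j. monom 1 j) (Suc n) = lowerOp q s (int n - 1) (SP q s (\<lambda>j. monom 1 j) n)"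
proof -
  let ?P = "\<lambda>j. monom 1 j :: complex poly"
  have qne: "q \<noteq> 1" using q1 by simp
  have ext1: "SP q s ?P (m+1) = (\<Sum>k<Suc (m+2). smult (cf q s (m+1) k) (?P (m+1-2*k)))" for m
  proof -
    have "SP q s ?P (m+1) = (\<Sum>k<Suc (m+1) + 1. smult (cf q s (m+1) k) (?P (m+1-2*k)))"
      by (rule SP_ext[symmetric])
    also have "Suc (m+1) + 1 = Suc (m+2)" by simp
    finally show ?thesis .
  qed
  have T: "(\<Sum>k<Suc (m+2). smult (cf q s (m+1) k) (?P (m+2-2*k))) = [:0,1:] * (SP q s ?P (m+1))" for m
    unfolding ext1 sum_distrib_left
  proof (rule sum.cong[OF refl])
    fix k assume "k \<in> {..<Suc (m+2)}"
    show "smult (cf q s (m+1) k) (?P (m+2-2*k)) = [:0,1:] * smult (cf q s (m+1) k) (?P (m+1-2*k))"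
    proof (cases "2*k \<le> m+1")
      case True
      hence "m+2-2*k = Suc (m+1-2*k)" by simp
      thus ?thesis by (simp add: lin_eq mult_monom smult_monom)
    qed (simp add: cf_def)
  qed
  have Dq: "qderiv q (SP q s ?P (m+1)) = smult (qnum q (m+1)) (SP q s ?P m)" for m
  proof -
    have e: "(\<Sum>k<m+2. smult (cf q s m k) (?P (m-2*k))) = SP q s ?P m"
      using SP_ext[where d=1 and n=m and q=q and s=s and P="?P"] by (simp only: Suc_eq_plus1 add.assoc one_add_one)
    have "qderiv q (SP q s ?P (m+1)) = (\<Sum>k<Suc (m+1). smult (cf q s (m+1) k) (qderiv q (?P (m+1-2*k))))"
      unfolding SP_def qderiv_sum[OF qne] qderiv_smult[OF qne] ..
    also have "\<dots> = (\<Sum>k<m+2. smult (qnum q (m+1)) (smult (cf q s m k) (?P (m-2*k))))"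
    proof (rule sum.cong)
      fix k assume "k \<in> {..<m+2}"
      have "m + 1 - 2 * k - 1 = m - 2*k" by simp
      thus "smult (cf q s (m+1) k) (qderiv q (?P (m+1-2*k))) = smult (qnum q (m+1)) (smult (cf q s m k) (?P (m-2*k)))"
        using cf_deriv[OF q0 q1, of s m k]
        by (simp add: qderiv_monom[OF qne] smult_monom mult.commute)
    qed simp
    also have "\<dots> = smult (qnum q (m+1)) (SP q s ?P m)"
      unfolding e[symmetric] smult_sum_poly ..
    finally show ?thesis .
  qed
  show ?thesis
  proof (cases n)
    case 0
    have d1: "qderiv q 1 = 0" using qderiv_monom[OF qne, of 1 0] by simp
    have d2: "qderiv q [:1:] = 0" using d1 by (metis one_pCons)
    have "cf q s (Suc 0) (Suc 0) = 0" by (simp add: cf_def)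
    thus ?thesis using 0 unfolding SP_def lowerOp_def by (simp add: cf_0[OF q0 q1] d1 d2 lin_eq)
  next
    case (Suc m)
    have "SP q s ?P (m+2) = [:0,1:] * SP q s ?P (m+1) - smult (s * complex_of_real q ^ m * qnum q (m+1)) (SP q s ?P m)"
      using SP_rec[OF q0 q1, of s ?P m] T[of m] by simp
    also have "\<dots> = lowerOp q s (int (m+1) - 1) (SP q s ?P (m+1))"
      unfolding lowerOp_def Dq by (simp add: power_int_of_nat mult.commute mult.left_commute)
    finally show ?thesis using Suc by simp
  qed
qed

lemma parti:
  assumes q0: "0 < q" and q1: "q < 1"
  shows "qHermite n s q = foldr (\<lambda>k f. lowerOp q s (int n - 1 - int k) f) [1..<n+1] 1"
proof (induct n)
  case 0
  show ?case unfolding qHermite_SP SP_def by (simp add: cf_0[OF q0 q1])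
next
  case (Suc n)
  have "foldr (\<lambda>k f. lowerOp q s (int (Suc n) - 1 - int k) f) [1..<Suc n+1] 1
     = lowerOp q s (int (Suc n) - 1 - 1) (foldr (\<lambda>k f. lowerOp q s (int (Suc n) - 1 - 1 - int k) f) [1..<n+1] 1)"
    by (rule foldr_step)
  also have "int (Suc n) - 1 - 1 = int n - 1" by simp
  finally show ?case using Suc unfolding qHermite_SP parti_rec[OF q0 q1] by simp
qed

theorem mainTheorem7:
  fixes q :: real and s :: complex
  assumes "0 < q" and "q < 1"
  shows "(\<forall>n\<ge>1. qHermite n s q =
            foldr (\<lambda>k f. lowerOp q s (int n - 1 - int k) f) [1..<n+1] 1)
       \<and> (\<forall>n. (\<Sum>k\<le>n div 2.
              smult ((-1)^k * complex_of_real q ^ (k*(k-1)) * qfact q n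
                     / (qfact q (n - 2*k) * qdfact q k) * s^k)
                    ((opA q s ^^ (n - 2*k)) 1)) = monom 1 n)"
proof (intro conjI allI impI)
  fix n :: nat
  show "qHermite n s q = foldr (\<lambda>k f. lowerOp q s (int n - 1 - int k) f) [1..<n+1] 1"
    by (rule parti[OF assms])
next
  fix n :: nat
  show "(\<Sum>k\<le>n div 2.
              smult ((-1)^k * complex_of_real q ^ (k*(k-1)) * qfact q n
                     / (qfact q (n - 2*k) * qdfact q k) * s^k)
                    ((opA q s ^^ (n - 2*k)) 1)) = monom 1 n"
    using sum_conv_SP[where n=n and q=q and s=s and P="\<lambda>j. (opA q s ^^ j) 1"] partii[OF assms, where s=s and n=n] by simp
qed

end
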